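(* Let $G$ be a finite, simple, connected graph. If $G$ contains an isometric cycle $C$ of length $n\ge 3$, then $\sigma(G)\ge \lceil n/3\rceil$.
   Context: A cycle $C$ in $G$ is isometric if $d_C(u,v)=d_G(u,v)$ for all vertices $u,v$ of $C$, where $d_C$, $d_G$ are graph distances in $C$ and in $G$. The stretch of $G$ is $\sigma(G)=\min_T\max_{uv\in E(G)} d_T(u,v)$, the minimum over all spanning trees $T$ of $G$. *)

theory Defs
  imports Complex_Main
begin

definition simple_graph :: "'a set \<Rightarrow> 'a set set \<Rightarrow> bool" where
  "simple_graph V E \<longleftrightarrow> finite V \<and> (\<forall>e\<in>E. card e = 2 \<and> e \<subseteq> V)"

definition walk :: "'a set \<Rightarrow> 'a set set \<Rightarrow> 'a list \<Rightarrow> bool" where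
  "walk V E xs \<longleftrightarrow> xs \<noteq> [] \<and> set xs \<subseteq> V \<and>
     (\<forall>i. i + 1 < length xs \<longrightarrow> {xs ! i, xs ! (i + 1)} \<in> E)"

definition connected_graph :: "'a set \<Rightarrow> 'a set set \<Rightarrow> bool" where
  "connected_graph V E \<longleftrightarrow> V \<noteq> {} \<and>
     (\<forall>u\<in>V. \<forall>v\<in>V. \<exists>xs. walk V E xs \<and> hd xs = u \<and> last xs = v)"

definition gdist :: "'a set \<Rightarrow> 'a set set \<Rightarrow> 'a \<Rightarrow> 'a \<Rightarrow> nat" where
  "gdist V E u v = (LEAST k. \<exists>xs. walk V E xs \<and> hd xs = u \<and> last xs = v \<and> length xs = k + 1)"

text \<open>A cycle, given by its cyclic sequence of distinct vertices (length = number of vertices = length of the cycle).\<close>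
definition is_cycle :: "'a set \<Rightarrow> 'a set set \<Rightarrow> 'a list \<Rightarrow> bool" where
  "is_cycle V E c \<longleftrightarrow> length c \<ge> 3 \<and> distinct c \<and> set c \<subseteq> V \<and>
     (\<forall>i < length c. {c ! i, c ! ((i + 1) mod length c)} \<in> E)"

definition cycle_edges :: "'a list \<Rightarrow> 'a set set" where
  "cycle_edges c = {{c ! i, c ! ((i + 1) mod length c)} | i. i < length c}"

definition isometric_cycle :: "'a set \<Rightarrow> 'a set set \<Rightarrow> 'a list \<Rightarrow> bool" where
  "isometric_cycle V E c \<longleftrightarrow> is_cycle V E c \<and>
     (\<forall>u\<in>set c. \<forall>v\<in>set c. gdist (set c) (cycle_edges c) u v = gdist V E u v)"

definition is_tree :: "'a set \<Rightarrow> 'a set set \<Rightarrow> bool" where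
  "is_tree V T \<longleftrightarrow> connected_graph V T \<and> \<not> (\<exists>c. is_cycle V T c)"

definition spanning_tree :: "'a set \<Rightarrow> 'a set set \<Rightarrow> 'a set set \<Rightarrow> bool" where
  "spanning_tree V E T \<longleftrightarrow> T \<subseteq> E \<and> is_tree V T"

definition stretch :: "'a set \<Rightarrow> 'a set set \<Rightarrow> nat" where
  "stretch V E = Min ((\<lambda>T. Max {gdist V T u v | u v. {u, v} \<in> E}) ` {T. spanning_tree V E T})"

end

theory Submission
  imports Defs
begin
lemma walk_Cons: "walk V F (x # y # xs) \<longleftrightarrow> x \<in> V \<and> {x,y} \<in> F \<and> walk V F (y # xs)"
  by (auto simp: walk_def nth_Cons split: nat.splits)

lemma walk_single[simp]: "walk V F [x] \<longleftrightarrow> x \<in> V"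
  by (auto simp: walk_def)

lemma walk_nonempty: "walk V F xs \<Longrightarrow> xs \<noteq> []"
  by (simp add: walk_def)

lemma walk_set: "walk V F xs \<Longrightarrow> set xs \<subseteq> V"
  by (simp add: walk_def)

lemma walk_edge: "walk V F xs \<Longrightarrow> i + 1 < length xs \<Longrightarrow> {xs!i, xs!(i+1)} \<in> F"
  by (simp add: walk_def)

lemma walk_mono: "F \<subseteq> F' \<Longrightarrow> walk V F xs \<Longrightarrow> walk V F' xs"
  by (auto simp: walk_def)

lemma walk_append:
  "walk V F xs \<Longrightarrow> walk V F ys \<Longrightarrow> last xs = hd ys \<Longrightarrow> walk V F (xs @ tl ys)"
proof (induction xs rule: induct_list012)
  case 1 then show ?case by (simp add: walk_def)
next
  case (2 x) then show ?case by (cases ys) auto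
next
  case (3 x y zs)
  then show ?case by (auto simp: walk_Cons)
qed

lemma walk_rev: "walk V F xs \<Longrightarrow> walk V F (rev xs)"
proof (induction xs rule: induct_list012)
  case 1 then show ?case by (simp add: walk_def)
next
  case (2 x) then show ?case by simp
next
  case (3 x y zs)
  have w: "walk V F (rev (y#zs))" using 3 by (auto simp: walk_Cons)
  have e: "walk V F [y,x]" using 3 by (auto simp: walk_Cons insert_commute dest: walk_set)
  have "walk V F (rev (y#zs) @ tl [y,x])"
    by (rule walk_append[OF w e]) simp
  then show ?case by simp
qed

lemma walk_take: "walk V F xs \<Longrightarrow> 0 < j \<Longrightarrow> walk V F (take j xs)"
  by (auto simp: walk_def dest: in_set_takeD)

lemma walk_drop: "walk V F xs \<Longrightarrow> j < length xs \<Longrightarrow> walk V F (drop j xs)"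
  by (auto simp: walk_def dest: in_set_dropD)

lemma walk_distinct:
  "walk V F xs \<Longrightarrow> \<exists>ys. walk V F ys \<and> distinct ys \<and> hd ys = hd xs \<and> last ys = last xs
     \<and> length ys \<le> length xs \<and> set ys \<subseteq> set xs"
proof (induction "length xs" arbitrary: xs rule: less_induct)
  case less
  show ?case
  proof (cases "distinct xs")
    case True then show ?thesis using less.prems by blast
  next
    case False
    then obtain as y bs cs where xs: "xs = as @ [y] @ bs @ [y] @ cs"
      using not_distinct_decomp by blast
    have w1: "walk V F (as @ [y])"
      using walk_take[OF less.prems, of "length as + 1"] xs by simp
    have w2: "walk V F (y # cs)"
      using walk_drop[OF less.prems, of "length as + 1 + length bs"] xs by simp
    have w: "walk V F ((as @ [y]) @ tl (y # cs))"
      by (rule walk_append[OF w1 w2]) simp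
    have "length ((as @ [y]) @ tl (y # cs)) < length xs" using xs by simp
    from less.hyps[OF this w] obtain ys where ys: "walk V F ys \<and> distinct ys \<and>
      hd ys = hd ((as @ [y]) @ tl (y # cs)) \<and> last ys = last ((as @ [y]) @ tl (y # cs)) \<and>
      length ys \<le> length ((as @ [y]) @ tl (y # cs)) \<and> set ys \<subseteq> set ((as @ [y]) @ tl (y # cs))"
      by blast
    show ?thesis
      apply (rule exI[of _ ys])
      using ys xs by (cases as; cases cs; auto)
  qed
qed

definition reach :: "'a set \<Rightarrow> 'a set set \<Rightarrow> 'a \<Rightarrow> 'a \<Rightarrow> bool" where
  "reach V F u v \<longleftrightarrow> (\<exists>w. walk V F w \<and> hd w = u \<and> last w = v)"

lemma reach_refl: "u \<in> V \<Longrightarrow> reach V F u u"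
  unfolding reach_def by (rule exI[of _ "[u]"]) simp

lemma reach_sym: "reach V F u v \<Longrightarrow> reach V F v u"
  unfolding reach_def
  by (metis walk_rev walk_nonempty hd_rev last_rev)

lemma reach_trans: "reach V F u v \<Longrightarrow> reach V F v x \<Longrightarrow> reach V F u x"
  unfolding reach_def
proof (elim exE conjE)
  fix w1 w2 assume a: "walk V F w1" "hd w1 = u" "last w1 = v" "walk V F w2" "hd w2 = v" "last w2 = x"
  have w: "walk V F (w1 @ tl w2)" using walk_append a by metis
  have "hd (w1 @ tl w2) = u" using a walk_nonempty by (cases w1) auto
  moreover have "last (w1 @ tl w2) = x" using a walk_nonempty
    by (cases w2) (auto)
  ultimately show "\<exists>w. walk V F w \<and> hd w = u \<and> last w = x" using w by blast
qed

lemma reach_edge: "{u,v} \<in> F \<Longrightarrow> u \<in> V \<Longrightarrow> v \<in> V \<Longrightarrow> reach V F u v"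
  unfolding reach_def by (rule exI[of _ "[u,v]"]) (simp add: walk_Cons)

lemma reach_mono: "F \<subseteq> F' \<Longrightarrow> reach V F u v \<Longrightarrow> reach V F' u v"
  unfolding reach_def using walk_mono by blast

lemma reach_V: "reach V F u v \<Longrightarrow> u \<in> V \<and> v \<in> V"
  unfolding reach_def by (metis hd_in_set last_in_set subsetD walk_nonempty walk_set)

lemma walk_reach:
  assumes "\<And>a b. {a,b} \<in> F \<Longrightarrow> a \<in> V \<Longrightarrow> b \<in> V \<Longrightarrow> reach V F' a b"
  shows "walk V F w \<Longrightarrow> reach V F' (hd w) (last w)"
proof (induction w rule: induct_list012)
  case 1 then show ?case by (simp add: walk_def)
next
  case (2 x) then show ?case by (simp add: reach_refl)
next
  case (3 x y zs)
  then have "reach V F' y (last (y#zs))" "reach V F' x y"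
    using assms by (auto simp: walk_Cons dest: walk_set)
  then show ?case using reach_trans by fastforce
qed

lemma gdist_le: "walk V F w \<Longrightarrow> gdist V F (hd w) (last w) + 1 \<le> length w"
proof -
  assume w: "walk V F w"
  then have "length w = (length w - 1) + 1" using walk_nonempty by (cases w) auto
  then have "\<exists>xs. walk V F xs \<and> hd xs = hd w \<and> last xs = last w \<and> length xs = (length w - 1) + 1"
    using w by blast
  then have "gdist V F (hd w) (last w) \<le> length w - 1"
    unfolding gdist_def by (rule Least_le)
  then show ?thesis using walk_nonempty[OF w] by (cases w) auto
qed

lemma gdist_ex: "reach V F u v \<Longrightarrow>
   \<exists>w. walk V F w \<and> hd w = u \<and> last w = v \<and> length w = gdist V F u v + 1"
proof -
  assume "reach V F u v"
  then obtain w where w: "walk V F w" "hd w = u" "last w = v" unfolding reach_def by blast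
  then have "length w = (length w - 1) + 1" using walk_nonempty by (cases w) auto
  then have "\<exists>k xs. walk V F xs \<and> hd xs = u \<and> last xs = v \<and> length xs = k + 1"
    using w by blast
  then show ?thesis unfolding gdist_def by (rule LeastI_ex)
qed

lemma gdist_sym: "reach V F u v \<Longrightarrow> gdist V F u v = gdist V F v u"
proof -
  have *: "gdist V F v u \<le> gdist V F u v" if r: "reach V F u v" for u v
  proof -
    obtain w where w: "walk V F w" "hd w = u" "last w = v" "length w = gdist V F u v + 1"
      using gdist_ex[OF r] by blast
    have "gdist V F (hd (rev w)) (last (rev w)) + 1 \<le> length (rev w)"
      using gdist_le walk_rev w(1) by blast
    then show ?thesis using w walk_nonempty[OF w(1)] by (simp add: hd_rev last_rev)
  qed
  assume "reach V F u v"
  then show ?thesis using *[of u v] *[of v u] reach_sym by fastforce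
qed

lemma gdist_triangle: "reach V F u m \<Longrightarrow> reach V F m v \<Longrightarrow>
   gdist V F u v \<le> gdist V F u m + gdist V F m v"
proof -
  assume r1: "reach V F u m" and r2: "reach V F m v"
  obtain w1 where w1: "walk V F w1" "hd w1 = u" "last w1 = m" "length w1 = gdist V F u m + 1"
    using gdist_ex[OF r1] by blast
  obtain w2 where w2: "walk V F w2" "hd w2 = m" "last w2 = v" "length w2 = gdist V F m v + 1"
    using gdist_ex[OF r2] by blast
  have w: "walk V F (w1 @ tl w2)" using walk_append w1 w2 by metis
  have "hd (w1 @ tl w2) = u" using w1 walk_nonempty by (cases w1) auto
  moreover have "last (w1 @ tl w2) = v" using w1 w2 walk_nonempty by (cases w2) auto
  ultimately have "gdist V F u v + 1 \<le> length (w1 @ tl w2)" using gdist_le[OF w] by simp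
  then show ?thesis using w1 w2 by simp
qed

lemma gdist_split:
  assumes w: "walk V F w" and m: "m \<in> set w"
  shows "gdist V F (hd w) m + gdist V F m (last w) + 1 \<le> length w"
proof -
  obtain j where j: "j < length w" "w ! j = m" using m by (auto simp: in_set_conv_nth)
  have wa: "walk V F (take (j+1) w)" using walk_take[OF w] by simp
  have wb: "walk V F (drop j w)" using walk_drop[OF w j(1)] .
  have "hd (take (j+1) w) = hd w" using j by (cases w) auto
  moreover have "last (take (j+1) w) = m" using j by (simp add: take_Suc_conv_app_nth)
  ultimately have 1: "gdist V F (hd w) m + 1 \<le> j + 1" using gdist_le[OF wa] j by simp
  have "hd (drop j w) = m" using j by (simp add: hd_drop_conv_nth)
  moreover have "last (drop j w) = last w" using j by simp
  ultimately have 2: "gdist V F m (last w) + 1 \<le> length w - j" using gdist_le[OF wb] by simp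
  show ?thesis using 1 2 j by linarith
qed

lemma gdist_mono: "F \<subseteq> F' \<Longrightarrow> reach V F u v \<Longrightarrow> gdist V F' u v \<le> gdist V F u v"
proof -
  assume s: "F \<subseteq> F'" and r: "reach V F u v"
  obtain w where w: "walk V F w" "hd w = u" "last w = v" "length w = gdist V F u v + 1"
    using gdist_ex[OF r] by blast
  show ?thesis using gdist_le[OF walk_mono[OF s w(1)]] w by simp
qed

definition fwd :: "'a list \<Rightarrow> nat \<Rightarrow> nat \<Rightarrow> 'a list" where
  "fwd c i d = map (\<lambda>t. c ! ((i+t) mod length c)) [0..<Suc d]"

lemma fwd_hd: "hd (fwd c i d) = c ! (i mod length c)"
  by (simp add: fwd_def hd_map del: upt_Suc)

lemma fwd_last: "last (fwd c i d) = c ! ((i + d) mod length c)"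
  by (simp add: fwd_def last_map del: upt_Suc)

lemma fwd_length: "length (fwd c i d) = Suc d"
  by (simp add: fwd_def)

lemma walk_fwd:
  assumes "set c \<subseteq> W" "c \<noteq> []"
    "\<forall>t<d. {c!((i+t) mod length c), c!((i+Suc t) mod length c)} \<in> F"
  shows "walk W F (fwd c i d)"
  unfolding walk_def
proof (intro conjI allI impI)
  show "fwd c i d \<noteq> []" by (simp add: fwd_def del: upt_Suc)
  show "set (fwd c i d) \<subseteq> W" using assms(1,2) by (auto simp: fwd_def del: upt_Suc)
  fix j assume "j + 1 < length (fwd c i d)"
  then have j: "j < d" by (simp add: fwd_length)
  then show "{fwd c i d ! j, fwd c i d ! (j + 1)} \<in> F" using assms(3)
    by (simp add: fwd_def nth_map del: upt_Suc)
qed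

lemma cycle_edge_idx: "p < length c \<Longrightarrow> {c!p, c!((p+1) mod length c)} \<in> cycle_edges c"
  unfolding cycle_edges_def by blast

lemma mod_suc_idx: "(i + Suc t) mod n = ((i + t) mod n + 1) mod n"
  by (simp add: mod_Suc_eq)

lemma cycle_fwd_walk:
  assumes "is_cycle V E c"
  shows "walk (set c) (cycle_edges c) (fwd c i d)" "walk V E (fwd c i d)"
proof -
  have n: "c \<noteq> []" "length c > 0" using assms by (auto simp: is_cycle_def)
  show "walk (set c) (cycle_edges c) (fwd c i d)"
    apply (rule walk_fwd) using n
     apply auto[2]
    apply (intro allI impI)
    subgoal for t using cycle_edge_idx[of "(i+t) mod length c" c] n by (simp add: mod_Suc_eq)
    done
  show "walk V E (fwd c i d)"
    apply (rule walk_fwd) using n assms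
     apply (auto simp: is_cycle_def)[2]
    apply (intro allI impI)
    subgoal for t using assms n unfolding is_cycle_def
      by (metis mod_Suc_eq mod_less_divisor Suc_eq_plus1 add_Suc_right)
    done
qed

lemma cycle_step:
  assumes "distinct c" "p < length c" "{c!p, x} \<in> cycle_edges c"
  shows "\<exists>q<length c. x = c!q \<and> (q = (p+1) mod length c \<or> p = (q+1) mod length c)"
proof -
  obtain i where i: "i < length c" "{c!p, x} = {c!i, c!((i+1) mod length c)}"
    using assms(3) unfolding cycle_edges_def by blast
  have il: "(i+1) mod length c < length c" by (rule mod_less_divisor) (use i in auto)
  from i(2) have "(c!p = c!i \<and> x = c!((i+1) mod length c)) \<or> (c!p = c!((i+1) mod length c) \<and> x = c!i)"
    by (auto simp: doubleton_eq_iff)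
  then show ?thesis
  proof
    assume a: "c!p = c!i \<and> x = c!((i+1) mod length c)"
    then have "p = i" using assms i nth_eq_iff_index_eq by metis
    then show ?thesis using a il by blast
  next
    assume a: "c!p = c!((i+1) mod length c) \<and> x = c!i"
    then have "p = (i+1) mod length c" using assms i il nth_eq_iff_index_eq by metis
    then show ?thesis using a i by blast
  qed
qed

lemma cycle_walk_disp:
  assumes "distinct c"
  shows "walk (set c) (cycle_edges c) w \<Longrightarrow> i < length c \<Longrightarrow> hd w = c!i \<Longrightarrow>
    \<exists>j<length c. last w = c!j \<and> (\<exists>s::int. \<bar>s\<bar> \<le> int (length w) - 1 \<and> (int i + s) mod int (length c) = int j)"
proof (induction w arbitrary: i rule: induct_list012)
  case 1 then show ?case by (simp add: walk_def)
next
  case (2 x) then show ?case by (intro exI[of _ i]) (auto intro!: exI[of _ 0])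
next
  case (3 x y zs)
  have e: "{c!i, y} \<in> cycle_edges c" using 3 by (simp add: walk_Cons)
  obtain q where q: "q < length c" "y = c!q" "q = (i+1) mod length c \<or> i = (q+1) mod length c"
    using cycle_step[OF assms 3(4) e] by blast
  have "walk (set c) (cycle_edges c) (y#zs)" using 3 by (simp add: walk_Cons)
  from 3(2)[OF this q(1)] q(2) obtain j s where js: "j < length c" "last (y#zs) = c!j"
    "\<bar>s\<bar> \<le> int (length (y#zs)) - 1" "(int q + s) mod int (length c) = int j" by auto
  define n where "n = length c"
  have npos: "n > 0" using q(1) n_def by (cases c) auto
  from q(3) have "\<exists>s'::int. \<bar>s'\<bar> \<le> \<bar>s\<bar> + 1 \<and> (int i + s') mod int n = int j"
  proof
    assume "q = (i+1) mod length c"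
    then have "int q = (int i + 1) mod int n" by (simp add: n_def zmod_int add.commute)
    then have "(int q + s) mod int n = ((int i + 1) mod int n + s) mod int n" by simp
    also have "\<dots> = (int i + 1 + s) mod int n" by (simp add: mod_add_left_eq)
    also have "\<dots> = (int i + (s+1)) mod int n" by (simp add: ac_simps)
    finally have "(int i + (s+1)) mod int n = int j" using js(4) n_def by simp
    then show ?thesis by (intro exI[of _ "s+1"]) auto
  next
    assume "i = (q+1) mod length c"
    then have "int i = (int q + 1) mod int n" by (simp add: n_def zmod_int add.commute)
    then have "(int i + (s-1)) mod int n = ((int q + 1) mod int n + (s-1)) mod int n" by simp
    also have "\<dots> = (int q + s) mod int n" by (simp add: mod_add_left_eq)
    finally have "(int i + (s-1)) mod int n = int j" using js(4) n_def by simp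
    then show ?thesis by (intro exI[of _ "s-1"]) auto
  qed
  then obtain s' where s': "\<bar>s'\<bar> \<le> \<bar>s\<bar> + 1" "(int i + s') mod int n = int j" by blast
  have "\<bar>s'\<bar> \<le> int (length (x#y#zs)) - 1" using s'(1) js(3) by simp
  then show ?case using js s'(2) n_def by (intro exI[of _ j]) auto
qed

lemma disp_bound:
  fixes s :: int and n d i :: nat
  assumes "(int i + s) mod int n = int ((i + d) mod n)" "2 * d \<le> n" "n > 0"
  shows "int d \<le> \<bar>s\<bar>"
proof -
  have "(int i + s) mod int n = (int i + int d) mod int n" using assms(1) by (simp add: zmod_int)
  then have "int n dvd (s - int d)" by (simp add: mod_eq_dvd_iff)
  then obtain t where t: "s - int d = int n * t" by (auto simp: dvd_def)
  show ?thesis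
  proof (cases "t = 0")
    case True then show ?thesis using t by simp
  next
    case False
    then have "t \<ge> 1 \<or> t \<le> -1" by linarith
    then show ?thesis
    proof
      assume "t \<ge> 1" then have "int n * t \<ge> int n" by (simp add: mult_le_cancel_left1)
      then show ?thesis using t by linarith
    next
      assume "t \<le> -1" then have "int n * t \<le> int n * (-1)" by (intro mult_left_mono) auto
      then have "int n * t \<le> - int n" by simp
      then show ?thesis using t assms(2) by linarith
    qed
  qed
qed

lemma cycle_dist_lower:
  assumes "is_cycle V E c" "i < length c" "2 * d \<le> length c"
  shows "d \<le> gdist (set c) (cycle_edges c) (c!i) (c!((i+d) mod length c))"
proof -
  let ?n = "length c"
  have np: "?n > 0" using assms by (auto simp: is_cycle_def)
  have r: "reach (set c) (cycle_edges c) (c!i) (c!((i+d) mod ?n))"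
    unfolding reach_def
    using cycle_fwd_walk(1)[OF assms(1), of i d] fwd_hd[of c i d] fwd_last[of c i d] assms(2)
    by auto
  obtain w where w: "walk (set c) (cycle_edges c) w" "hd w = c!i" "last w = c!((i+d) mod ?n)"
      "length w = gdist (set c) (cycle_edges c) (c!i) (c!((i+d) mod ?n)) + 1"
    using gdist_ex[OF r] by blast
  have dc: "distinct c" using assms by (simp add: is_cycle_def)
  obtain j s where js: "j < ?n" "last w = c!j" "\<bar>s\<bar> \<le> int (length w) - 1" "(int i + s) mod int ?n = int j"
    using cycle_walk_disp[OF dc w(1) assms(2) w(2)] by blast
  have "j = (i+d) mod ?n" using js(1,2) w(3) dc np nth_eq_iff_index_eq by (metis mod_less_divisor)
  then have "int d \<le> \<bar>s\<bar>" using disp_bound js(4) assms(3) np by blast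
  then show ?thesis using js(3) w(4) by linarith
qed

lemma bridge:
  assumes acyc: "\<not>(\<exists>c. is_cycle V T c)" and e: "{x,y} \<in> T" and xy: "x \<noteq> y"
  shows "\<not> reach V (T - {{x,y}}) y x"
proof
  assume "reach V (T - {{x,y}}) y x"
  then obtain w where w: "walk V (T - {{x,y}}) w" "hd w = y" "last w = x"
    unfolding reach_def by blast
  obtain ys where ys: "walk V (T - {{x,y}}) ys" "distinct ys" "hd ys = y" "last ys = x"
    using walk_distinct[OF w(1)] w by metis
  have ne: "ys \<noteq> []" using ys walk_nonempty by blast
  have l2: "length ys \<ge> 2"
  proof (rule ccontr)
    assume "\<not> length ys \<ge> 2"
    then obtain z where "ys = [z]" using ne by (cases ys; cases "tl ys") auto
    then show False using ys xy by simp
  qed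
  have l3: "length ys \<ge> 3"
  proof (rule ccontr)
    assume "\<not> length ys \<ge> 3"
    then have "length ys = 2" using l2 by simp
    then obtain a b where ab: "ys = [a,b]"
      by (metis (no_types, lifting) One_nat_def Suc_1 length_0_conv length_Suc_conv)
    then have "{y,x} \<in> T - {{x,y}}" using ys walk_edge[OF ys(1), of 0] by simp
    then show False by (simp add: insert_commute)
  qed
  have "is_cycle V T ys"
    unfolding is_cycle_def
  proof (intro conjI allI impI)
    show "3 \<le> length ys" by fact
    show "distinct ys" by fact
    show "set ys \<subseteq> V" using walk_set[OF ys(1)] .
    fix i assume i: "i < length ys"
    show "{ys ! i, ys ! ((i + 1) mod length ys)} \<in> T"
    proof (cases "i + 1 < length ys")
      case True
      then show ?thesis using walk_edge[OF ys(1) True] by simp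
    next
      case False
      then have si: "Suc i = length ys" using i by simp
      then have "i = length ys - 1" "(i+1) mod length ys = 0" by auto
      then have "ys ! i = x" "ys ! ((i + 1) mod length ys) = y"
        using ys ne by (auto simp: last_conv_nth hd_conv_nth)
      then show ?thesis using e by simp
    qed
  qed
  then show False using acyc by blast
qed

lemma spanning_tree_exists:
  assumes sg: "simple_graph V E" and con: "connected_graph V E"
  shows "\<exists>T. spanning_tree V E T"
proof -
  have finE: "finite E" using sg unfolding simple_graph_def
    by (meson Pow_iff finite_Pow_iff finite_subset subsetI)
  define Q where "Q T \<longleftrightarrow> T \<subseteq> E \<and> connected_graph V T" for T
  have "Q E" using con by (simp add: Q_def)
  then obtain T where T: "Q T" and Tmin: "\<And>T'. Q T' \<Longrightarrow> card T \<le> card T'"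
    using ex_has_least_nat[of Q E card] by blast
  have finT: "finite T" using T finE by (auto simp: Q_def intro: finite_subset)
  have "\<not>(\<exists>c. is_cycle V T c)"
  proof
    assume "\<exists>c. is_cycle V T c"
    then obtain c where cy: "is_cycle V T c" by blast
    let ?n = "length c"
    have n3: "?n \<ge> 3" and dc: "distinct c" and cV: "set c \<subseteq> V"
      and ce: "\<forall>i<?n. {c ! i, c ! ((i + 1) mod ?n)} \<in> T"
      using cy by (auto simp: is_cycle_def)
    define e where "e = {c!0, c!1}"
    have eT: "e \<in> T" using ce n3 by (auto simp: e_def dest: spec[of _ 0])
    define T' where "T' = T - {e}"
    have c01: "reach V T' (c!1) (c!0)"
    proof -
      have "walk V T' (fwd c 1 (?n - 1))"
      proof (rule walk_fwd)
        show "set c \<subseteq> V" by fact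
        show "c \<noteq> []" using n3 by auto
        show "\<forall>t<?n - 1. {c ! ((1 + t) mod ?n), c ! ((1 + Suc t) mod ?n)} \<in> T'"
        proof (intro allI impI)
          fix t assume t: "t < ?n - 1"
          have m1: "(1 + t) mod ?n = 1 + t" using t by simp
          have m2: "(1 + Suc t) mod ?n = ((1+t)+1) mod ?n" by simp
          have inT: "{c ! (1+t), c ! (((1+t)+1) mod ?n)} \<in> T" using ce[rule_format, of "1+t"] t by simp
          have ne: "{c ! (1+t), c ! (((1+t)+1) mod ?n)} \<noteq> e"
          proof
            assume eq: "{c ! (1+t), c ! (((1+t)+1) mod ?n)} = e"
            have l: "1 + t < ?n" "0 < ?n" "1 < ?n" using t n3 by auto
            from eq have "c!(1+t) = c!0 \<or> c!(1+t) = c!1" by (auto simp: e_def doubleton_eq_iff)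
            then have "1 + t = 1" using nth_eq_iff_index_eq[OF dc, of "1+t" 0] nth_eq_iff_index_eq[OF dc, of "1+t" 1] l by auto
            then have "t = 0" by simp
            with eq have "c!(Suc (Suc 0) mod ?n) = c!0" by (auto simp: e_def doubleton_eq_iff)
            moreover have "Suc (Suc 0) mod ?n = 2" using n3 by simp
            ultimately have "c!2 = c!0" by simp
            then show False using nth_eq_iff_index_eq[OF dc, of 2 0] n3 by (cases c) auto
          qed
          show "{c ! ((1 + t) mod ?n), c ! ((1 + Suc t) mod ?n)} \<in> T'"
            using inT ne m1 m2 by (simp add: T'_def)
        qed
      qed
      moreover have "hd (fwd c 1 (?n - 1)) = c!1" using n3 by (simp add: fwd_hd)
      moreover have "Suc (?n - Suc 0) = ?n" using n3 by simp
      then have "last (fwd c 1 (?n - 1)) = c!0" by (simp add: fwd_last)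
      ultimately show ?thesis unfolding reach_def by blast
    qed
    have "connected_graph V T'"
      unfolding connected_graph_def
    proof (intro conjI ballI)
      show "V \<noteq> {}" using T by (simp add: Q_def connected_graph_def)
      fix u v assume uv: "u \<in> V" "v \<in> V"
      then obtain w where w: "walk V T w" "hd w = u" "last w = v"
        using T uv unfolding Q_def connected_graph_def by blast
      have "reach V T' (hd w) (last w)"
      proof (rule walk_reach[OF _ w(1)])
        fix a b assume ab: "{a,b} \<in> T" "a \<in> V" "b \<in> V"
        show "reach V T' a b"
        proof (cases "{a,b} = e")
          case False then show ?thesis using ab reach_edge[of a b T' V] by (simp add: T'_def)
        next
          case True
          then have "(a = c!0 \<and> b = c!1) \<or> (a = c!1 \<and> b = c!0)"
            by (auto simp: e_def doubleton_eq_iff)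
          then show ?thesis using c01 reach_sym[OF c01] by blast
        qed
      qed
      then show "\<exists>xs. walk V T' xs \<and> hd xs = u \<and> last xs = v" using w by (simp add: reach_def)
    qed
    then have "Q T'" using T by (auto simp: Q_def T'_def)
    moreover have "card T' < card T" using finT eT unfolding T'_def by (rule card_Diff1_less)
    ultimately show False using Tmin by fastforce
  qed
  then show ?thesis using T by (auto simp: spanning_tree_def is_tree_def Q_def)
qed

lemma walk_reach_mem: "walk V F w \<Longrightarrow> u \<in> set w \<Longrightarrow> reach V F (hd w) u"
proof -
  assume w: "walk V F w" and u: "u \<in> set w"
  obtain j where j: "j < length w" "w ! j = u" using u by (auto simp: in_set_conv_nth)
  have wa: "walk V F (take (j+1) w)" using walk_take[OF w] by simp
  have "hd (take (j+1) w) = hd w" using j by (cases w) auto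
  moreover have "last (take (j+1) w) = u" using j by (simp add: take_Suc_conv_app_nth)
  ultimately show ?thesis using wa unfolding reach_def by metis
qed

lemma runs_meet_aux:
  fixes n h a b :: nat
  assumes n: "n > 0" "n \<le> 2*h+1" and ab: "a mod n \<le> b mod n"
  shows "\<exists>t1\<le>h. \<exists>t2\<le>h. (a+t1) mod n = (b+t2) mod n"
proof -
  define d where "d = b mod n - a mod n"
  have dn: "d < n" using n by (simp add: d_def less_imp_diff_less)
  show ?thesis
  proof (cases "d \<le> h")
    case True
    have "(a + d) mod n = (a mod n + d) mod n" by (simp add: mod_add_left_eq)
    also have "\<dots> = b mod n" using ab by (simp add: d_def)
    also have "\<dots> = (b + 0) mod n" by simp
    finally show ?thesis using True by blast
  next
    case False
    then have le: "n - d \<le> h" using n by linarith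
    have "(b + (n - d)) mod n = (b mod n + (n - d)) mod n" by (simp add: mod_add_left_eq)
    also have "b mod n + (n - d) = a mod n + n" using ab dn by (simp add: d_def)
    also have "(a mod n + n) mod n = (a + 0) mod n" by simp
    finally show ?thesis using le by (metis le0)
  qed
qed

lemma runs_meet:
  fixes n h a b :: nat
  assumes n: "n > 0" "n \<le> 2*h+1"
  shows "\<exists>t1\<le>h. \<exists>t2\<le>h. (a+t1) mod n = (b+t2) mod n"
proof (cases "a mod n \<le> b mod n")
  case True then show ?thesis using runs_meet_aux[OF n True] by blast
next
  case False then have "b mod n \<le> a mod n" by simp
  then show ?thesis using runs_meet_aux[OF n, of b a] by metis
qed

locale tsetup =
  fixes V :: "'a set" and T :: "'a set set" and c :: "'a list" and P :: "nat \<Rightarrow> 'a list"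
  assumes Tedge: "\<And>e. e \<in> T \<Longrightarrow> card e = 2 \<and> e \<subseteq> V"
    and finV: "finite V"
    and Tconn: "connected_graph V T"
    and Tacyc: "\<not>(\<exists>c. is_cycle V T c)"
    and len3: "length c \<ge> 3"
    and cV: "set c \<subseteq> V"
    and Pw: "\<And>i. i < length c \<Longrightarrow> walk V T (P i) \<and> hd (P i) = c!i \<and> last (P i) = c!((i+1) mod length c)"
begin

abbreviation "n \<equiv> length c"
abbreviation "h \<equiv> length c div 2"

definition Side :: "'a \<Rightarrow> 'a \<Rightarrow> 'a set" where
  "Side x y = {v. reach V (T - {{x,y}}) y v}"

definition good :: "'a \<Rightarrow> bool" where
  "good m \<longleftrightarrow> (\<forall>a. \<exists>t<h. m \<in> set (P ((a+t) mod n)))"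

lemma edge_ne: "{x,y} \<in> T \<Longrightarrow> x \<noteq> y \<and> x \<in> V \<and> y \<in> V"
  using Tedge[of "{x,y}"] by (cases "x = y") auto

lemma side_V: "Side x y \<subseteq> V"
proof
  fix v assume "v \<in> Side x y"
  then have "reach V (T - {{x,y}}) y v" by (simp add: Side_def)
  then show "v \<in> V" using reach_V[THEN conjunct2] by metis
qed

lemma bridge': "{x,y} \<in> T \<Longrightarrow> x \<notin> Side x y"
proof -
  assume e: "{x,y} \<in> T"
  have "x \<noteq> y" using edge_ne[OF e] by simp
  then have "\<not> reach V (T - {{x,y}}) y x" using bridge[OF Tacyc e] by simp
  then show ?thesis unfolding Side_def by simp
qed

lemma side_y: "{x,y} \<in> T \<Longrightarrow> y \<in> Side x y"
  unfolding Side_def using reach_refl[of y V] edge_ne[of x y] by simp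

lemma side_step: "u \<in> Side x y \<Longrightarrow> {u,w} \<in> T \<Longrightarrow> {u,w} \<noteq> {x,y} \<Longrightarrow> w \<in> Side x y"
proof -
  assume u: "u \<in> Side x y" and e: "{u,w} \<in> T" and ne: "{u,w} \<noteq> {x,y}"
  have r: "reach V (T - {{x,y}}) y u" using u unfolding Side_def by blast
  have "reach V (T - {{x,y}}) u w" using e ne edge_ne[OF e] by (intro reach_edge) auto
  then show "w \<in> Side x y" using reach_trans[OF r] unfolding Side_def by blast
qed

lemma side_walk:
  "walk V T w \<Longrightarrow> hd w \<in> Side x y \<Longrightarrow> (\<forall>i. i+1 < length w \<longrightarrow> {w!i, w!(i+1)} \<noteq> {x,y})
   \<Longrightarrow> set w \<subseteq> Side x y"
proof (induction w rule: induct_list012)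
  case 1 then show ?case by simp
next
  case (2 z) then show ?case by simp
next
  case (3 u v zs)
  have e: "{u,v} \<in> T" "{u,v} \<noteq> {x,y}" using 3(3) spec[OF 3(5), of 0]
    by (auto simp: walk_Cons)
  have vs: "v \<in> Side x y" using side_step[OF _ e] 3(4) by simp
  have "set (v#zs) \<subseteq> Side x y"
  proof (rule 3(2))
    show "walk V T (v # zs)" using 3(3) by (simp add: walk_Cons)
    show "hd (v # zs) \<in> Side x y" using vs by simp
    show "\<forall>i. i + 1 < length (v # zs) \<longrightarrow> {(v # zs) ! i, (v # zs) ! (i + 1)} \<noteq> {x, y}"
    proof (intro allI impI)
      fix i assume "i + 1 < length (v # zs)"
      then have "Suc i + 1 < length (u # v # zs)" by simp
      then have "{(u#v#zs) ! Suc i, (u#v#zs) ! (Suc i + 1)} \<noteq> {x, y}" using 3(5) by blast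
      then show "{(v # zs) ! i, (v # zs) ! (i + 1)} \<noteq> {x, y}" by simp
    qed
  qed
  then show ?case using 3(4) by simp
qed

lemma sides_disj: "{x,y} \<in> T \<Longrightarrow> Side x y \<inter> Side y x = {}"
proof (rule ccontr)
  assume e: "{x,y} \<in> T" and "Side x y \<inter> Side y x \<noteq> {}"
  then obtain v where r1: "reach V (T - {{x,y}}) y v" and r2: "reach V (T - {{y,x}}) x v"
    unfolding Side_def by blast
  have "{y,x} = {x,y}" by (rule insert_commute)
  then have r2': "reach V (T - {{x,y}}) x v" using r2 by simp
  have "reach V (T - {{x,y}}) y x" by (rule reach_trans[OF r1 reach_sym[OF r2']])
  then show False using bridge'[OF e] unfolding Side_def by simp
qed

lemma side_sub:
  assumes xy: "{x,y} \<in> T" and yz: "{y,z} \<in> T" and zx: "z \<noteq> x"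
  shows "Side y z \<subseteq> Side x y" "y \<notin> Side y z"
proof -
  show ny: "y \<notin> Side y z" using bridge'[OF yz] .
  have "z \<noteq> y" using edge_ne[OF yz] by blast
  then have ne: "{y,z} \<noteq> {x,y}" using zx by (auto simp: doubleton_eq_iff)
  have zs: "z \<in> Side x y" using side_step[OF side_y[OF xy] yz ne] .
  show "Side y z \<subseteq> Side x y"
  proof
    fix v assume "v \<in> Side y z"
    then obtain w where w: "walk V (T - {{y,z}}) w" "hd w = z" "last w = v"
      unfolding Side_def reach_def by blast
    have yw: "y \<notin> set w"
    proof
      assume "y \<in> set w"
      then have "reach V (T - {{y,z}}) z y" using walk_reach_mem[OF w(1)] w(2) by blast
      then show False using ny unfolding Side_def by blast
    qed
    have wT: "walk V T w" using walk_mono[OF _ w(1)] by blast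
    have "\<forall>i. i+1 < length w \<longrightarrow> {w!i, w!(i+1)} \<noteq> {x,y}"
    proof (intro allI impI)
      fix i assume "i + 1 < length w"
      then have "w!i \<in> set w" "w!(i+1) \<in> set w" by auto
      then show "{w!i, w!(i+1)} \<noteq> {x,y}" using yw by (auto simp: doubleton_eq_iff)
    qed
    then have "set w \<subseteq> Side x y" using side_walk[OF wT] zs w(2) by blast
    then show "v \<in> Side x y" using w(3) walk_nonempty[OF w(1)] last_in_set by blast
  qed
qed

lemma neighbor_side:
  assumes m: "m \<in> V" and v: "v \<in> V" "v \<noteq> m"
  shows "\<exists>z. {m,z} \<in> T \<and> v \<in> Side m z"
proof -
  obtain w0 where w0: "walk V T w0" "hd w0 = v" "last w0 = m"
    using Tconn m v unfolding connected_graph_def by blast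
  obtain w where w: "walk V T w" "distinct w" "hd w = v" "last w = m"
    using walk_distinct[OF w0(1)] w0 by metis
  have ne: "w \<noteq> []" using walk_nonempty[OF w(1)] .
  have l2: "length w \<ge> 2"
  proof (rule ccontr)
    assume "\<not> length w \<ge> 2"
    then obtain z where "w = [z]" using ne by (cases w; cases "tl w") auto
    then show False using w v by simp
  qed
  define z where "z = w ! (length w - 2)"
  have lm: "w ! (length w - 1) = m" using w(4) ne by (simp add: last_conv_nth)
  have "{w ! (length w - 2), w ! (length w - 2 + 1)} \<in> T"
    using walk_edge[OF w(1), of "length w - 2"] l2 by simp
  moreover have "length w - 2 + 1 = length w - 1" using l2 by simp
  ultimately have zm: "{z, m} \<in> T" using lm z_def by simp
  define w' where "w' = take (length w - 1) w"
  have w'w: "walk V T w'" unfolding w'_def using walk_take[OF w(1)] l2 by simp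
  have mw': "m \<notin> set w'"
  proof
    assume "m \<in> set w'"
    then obtain j where j: "j < length w - 1" "w ! j = m" unfolding w'_def
      by (auto simp: in_set_conv_nth)
    have "length w - 1 < length w" using l2 by simp
    then have "j = length w - 1" using nth_eq_iff_index_eq[OF w(2), of j "length w - 1"] j lm by simp
    then show False using j by simp
  qed
  have w'2: "walk V (T - {{m,z}}) w'"
    unfolding walk_def
  proof (intro conjI allI impI)
    show "w' \<noteq> []" using walk_nonempty[OF w'w] .
    show "set w' \<subseteq> V" using walk_set[OF w'w] .
    fix i assume i: "i + 1 < length w'"
    then have "w'!i \<in> set w'" "w'!(i+1) \<in> set w'" by auto
    then have "{w'!i, w'!(i+1)} \<noteq> {m,z}" using mw' by (auto simp: doubleton_eq_iff)
    then show "{w'!i, w'!(i+1)} \<in> T - {{m,z}}" using walk_edge[OF w'w i] by simp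
  qed
  have "hd w' = v" unfolding w'_def using w(3) l2 by (cases w; cases "tl w") auto
  moreover have "last w' = z"
  proof -
    have ne': "w' \<noteq> []" unfolding w'_def using l2 ne by simp
    have lw: "length w' = length w - 1" unfolding w'_def using l2 by simp
    have "last w' = w' ! (length w - 1 - 1)" using last_conv_nth[OF ne'] lw by simp
    also have "\<dots> = w ! (length w - 2)" unfolding w'_def using l2
      by (simp add: nth_take numeral_2_eq_2)
    finally show ?thesis by (simp add: z_def)
  qed
  ultimately have "reach V (T - {{m,z}}) v z" using w'2 unfolding reach_def by blast
  then have "reach V (T - {{m,z}}) z v" by (rule reach_sym)
  moreover have "{m,z} \<in> T" using zm by (simp add: insert_commute)
  ultimately show ?thesis unfolding Side_def by blast
qed

end

context tsetup
begin

lemma nfacts: "n \<ge> 3" "h \<ge> 1" "h < n" "n \<le> 2*h+1" "n > 0"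
  using len3 by auto

lemma Pidx: "walk V T (P ((a+t) mod n))" "hd (P ((a+t) mod n)) = c!((a+t) mod n)"
   "last (P ((a+t) mod n)) = c!((a + Suc t) mod n)"
proof -
  have l: "(a+t) mod n < n" using nfacts by simp
  show "walk V T (P ((a+t) mod n))" "hd (P ((a+t) mod n)) = c!((a+t) mod n)" using Pw[OF l] by auto
  have "last (P ((a+t) mod n)) = c!(((a+t) mod n + 1) mod n)" using Pw[OF l] by auto
  also have "((a+t) mod n + 1) mod n = (a + Suc t) mod n" by (simp add: mod_Suc_eq)
  finally show "last (P ((a+t) mod n)) = c!((a + Suc t) mod n)" .
qed

lemma run_in_side:
  assumes m: "m \<in> V" and nm: "\<forall>t<h. m \<notin> set (P ((a+t) mod n))"
  shows "\<exists>z. {m,z} \<in> T \<and> (\<forall>t<h. set (P ((a+t) mod n)) \<subseteq> Side m z)"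
proof -
  have h0: "0 < h" using nfacts by simp
  define v where "v = c ! ((a+0) mod n)"
  have vin: "v \<in> set (P ((a+0) mod n))"
    using Pidx(2)[of a 0] walk_nonempty[OF Pidx(1)[of a 0]] hd_in_set v_def by metis
  have vV: "v \<in> V" using cV nfacts v_def by auto
  have vm: "v \<noteq> m" using nm h0 vin by blast
  obtain z where z: "{m,z} \<in> T" "v \<in> Side m z" using neighbor_side[OF m vV vm] by blast
  have step: "set (P ((a+t) mod n)) \<subseteq> Side m z"
    if t: "t < h" and hs: "hd (P ((a+t) mod n)) \<in> Side m z" for t
  proof (rule side_walk[OF Pidx(1) hs], intro allI impI)
    fix i assume i: "i + 1 < length (P ((a+t) mod n))"
    then have "P ((a+t) mod n) ! i \<in> set (P ((a+t) mod n))" by simp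
    then have "P ((a+t) mod n) ! i \<noteq> m" using nm t by blast
    moreover have "P ((a+t) mod n) ! (i+1) \<in> set (P ((a+t) mod n))" using i by simp
    then have "P ((a+t) mod n) ! (i+1) \<noteq> m" using nm t by blast
    ultimately show "{P ((a+t) mod n) ! i, P ((a+t) mod n) ! (i+1)} \<noteq> {m, z}"
      by (auto simp: doubleton_eq_iff)
  qed
  have "\<forall>t<h. set (P ((a+t) mod n)) \<subseteq> Side m z"
  proof (intro allI impI)
    fix t assume "t < h"
    then show "set (P ((a+t) mod n)) \<subseteq> Side m z"
    proof (induction t)
      case 0
      then show ?case using step[of 0] z(2) Pidx(2)[of a 0] v_def by simp
    next
      case (Suc t)
      then have IH: "set (P ((a+t) mod n)) \<subseteq> Side m z" by simp
      have "last (P ((a+t) mod n)) \<in> Side m z"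
        using IH walk_nonempty[OF Pidx(1)[of a t]] last_in_set by blast
      then have "hd (P ((a + Suc t) mod n)) \<in> Side m z" using Pidx(2)[of a "Suc t"] Pidx(3)[of a t]
        by simp
      then show ?case using step[of "Suc t"] Suc.prems by simp
    qed
  qed
  then show ?thesis using z(1) by blast
qed

lemma run_vertices:
  assumes S: "\<forall>t<h. set (P ((a+t) mod n)) \<subseteq> S" and t: "t \<le> h"
  shows "c ! ((a+t) mod n) \<in> S"
proof (cases "t < h")
  case True
  have "c ! ((a+t) mod n) \<in> set (P ((a+t) mod n))"
    using Pidx(2)[of a t] walk_nonempty[OF Pidx(1)[of a t]] hd_in_set by metis
  then show ?thesis using S True by blast
next
  case False
  then have th: "t = Suc (h - 1)" using t nfacts by simp
  have "c ! ((a+t) mod n) = last (P ((a + (h-1)) mod n))" using Pidx(3)[of a "h-1"] th by simp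
  also have "\<dots> \<in> set (P ((a + (h-1)) mod n))" using walk_nonempty[OF Pidx(1)] last_in_set by blast
  finally have mem: "c ! ((a+t) mod n) \<in> set (P ((a + (h-1)) mod n))" .
  have "h - 1 < h" using nfacts by simp
  then have "set (P ((a + (h-1)) mod n)) \<subseteq> S" using S by blast
  then show ?thesis using mem by blast
qed

lemma good_exists: "\<exists>m\<in>V. good m"
proof (rule ccontr)
  assume ng: "\<not> (\<exists>m\<in>V. good m)"
  have heavy_of: "\<exists>z a. {m,z} \<in> T \<and> (\<forall>t<h. set (P ((a+t) mod n)) \<subseteq> Side m z)" if m: "m \<in> V" for m
  proof -
    have "\<not> good m" using ng m by blast
    then obtain a where "\<forall>t<h. m \<notin> set (P ((a+t) mod n))" unfolding good_def by blast
    then show ?thesis using run_in_side[OF m] by blast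
  qed
  define Q where "Q = (\<lambda>(x,y). {x,y} \<in> T \<and> (\<exists>a. \<forall>t<h. set (P ((a+t) mod n)) \<subseteq> Side x y))"
  have c0: "c!0 \<in> V" using cV nfacts by auto
  obtain z0 where "Q (c!0, z0)" using heavy_of[OF c0] unfolding Q_def by auto
  then obtain p where Qp: "Q p" and pmin: "\<And>q. Q q \<Longrightarrow> card (case p of (x,y) \<Rightarrow> Side x y) \<le> card (case q of (x,y) \<Rightarrow> Side x y)"
    using ex_has_least_nat[of Q "(c!0, z0)" "\<lambda>(x,y). card (Side x y)"] by auto
  obtain x y where p: "p = (x,y)" by (cases p)
  have xy: "{x,y} \<in> T" and ra: "\<exists>a. \<forall>t<h. set (P ((a+t) mod n)) \<subseteq> Side x y"
    using Qp p unfolding Q_def by auto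
  obtain a where ra: "\<forall>t<h. set (P ((a+t) mod n)) \<subseteq> Side x y" using ra by blast
  have yV: "y \<in> V" using edge_ne[OF xy] by simp
  obtain z b where yz: "{y,z} \<in> T" and rb: "\<forall>t<h. set (P ((b+t) mod n)) \<subseteq> Side y z"
    using heavy_of[OF yV] by blast
  obtain t1 t2 where t12: "t1 \<le> h" "t2 \<le> h" "(a+t1) mod n = (b+t2) mod n"
    using runs_meet[of n h a b] nfacts by blast
  have in1: "c ! ((a+t1) mod n) \<in> Side x y" using run_vertices[OF ra t12(1)] .
  have in2: "c ! ((a+t1) mod n) \<in> Side y z" using run_vertices[OF rb t12(2)] t12(3) by simp
  show False
  proof (cases "z = x")
    case True
    then show False using sides_disj[OF xy] in1 in2 by blast
  next
    case False
    have sub: "Side y z \<subseteq> Side x y" "y \<notin> Side y z" using side_sub[OF xy yz False] by auto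
    have "y \<in> Side x y" using side_y[OF xy] .
    then have "Side y z \<subset> Side x y" using sub by blast
    moreover have "finite (Side x y)" using finV side_V finite_subset by blast
    ultimately have lt: "card (Side y z) < card (Side x y)" by (rule psubset_card_mono[rotated])
    have "Q (y,z)" unfolding Q_def using yz rb by auto
    then have "card (Side x y) \<le> card (Side y z)" using pmin[of "(y,z)"] p by simp
    then show False using lt by simp
  qed
qed

end

lemma select3:
  fixes Q :: "nat \<Rightarrow> bool" and n h :: nat
  assumes n: "n > 0" "n \<le> 2*h+1"
    and good: "\<forall>a. \<exists>t<h. Q ((a+t) mod n)"
  shows "\<exists>p d2 d3. p < n \<and> Q p \<and> Q ((p+d2) mod n) \<and> Q ((p+d3) mod n) \<and>
     d2 \<le> h \<and> d2 \<le> d3 \<and> d3 \<le> d2 + h \<and> n \<le> d3 + h \<and> d3 < n"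
proof -
  obtain t0 where "t0 < h" "Q ((0+t0) mod n)" using good by blast
  define p where "p = t0 mod n"
  have p: "p < n" "Q p" using n \<open>Q ((0+t0) mod n)\<close> by (auto simp: p_def)
  define S where "S = {d. d < n \<and> Q ((p+d) mod n)}"
  have finS: "finite S" unfolding S_def by simp
  have S0: "0 \<in> S" using p n by (simp add: S_def)
  define A where "A = {d\<in>S. d \<le> h}"
  define d2 where "d2 = Max A"
  have A: "finite A" "0 \<in> A" using finS S0 by (auto simp: A_def)
  have d2A: "d2 \<in> A" unfolding d2_def using A Max_in by blast
  have d2max: "\<And>d. d \<in> A \<Longrightarrow> d \<le> d2" unfolding d2_def using A by simp
  define B where "B = {d\<in>S. d \<le> d2 + h}"
  define d3 where "d3 = Max B"
  have B: "finite B" "d2 \<in> B" using finS d2A by (auto simp: A_def B_def)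
  have d3B: "d3 \<in> B" unfolding d3_def using B Max_in by blast
  have d3max: "\<And>d. d \<in> B \<Longrightarrow> d \<le> d3" unfolding d3_def using B by simp
  have d23: "d2 \<le> d3" using d3max B by simp
  have "n \<le> d3 + h"
  proof (rule ccontr)
    assume c: "\<not> n \<le> d3 + h"
    obtain t where t: "t < h" "Q ((p + d2 + 1 + t) mod n)" using good by blast
    define d' where "d' = d2 + 1 + t"
    show False
    proof (cases "d' < n")
      case True
      then have dS: "d' \<in> S" using t unfolding S_def d'_def by (simp add: add.assoc)
      then have "d' \<in> B" using t unfolding B_def d'_def by simp
      then have "d' \<le> d3" by (rule d3max)
      moreover have "\<not> d' \<le> h"
      proof
        assume "d' \<le> h"
        then have "d' \<in> A" using dS unfolding A_def by simp
        then have "d' \<le> d2" by (rule d2max)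
        then show False unfolding d'_def by simp
      qed
      ultimately show False using c n by linarith
    next
      case False
      then show False using c d23 t unfolding d'_def by linarith
    qed
  qed
  moreover have "d2 \<le> h" using d2A by (simp add: A_def)
  moreover have "d3 \<le> d2 + h" using d3B by (simp add: B_def)
  moreover have "Q ((p+d2) mod n)" using d2A by (simp add: A_def S_def)
  moreover have "Q ((p+d3) mod n)" using d3B by (simp add: B_def S_def)
  moreover have "d3 < n" using d3B by (simp add: B_def S_def)
  ultimately show ?thesis using p d23 by blast
qed

lemma tree_bound:
  assumes sg: "simple_graph V E" and con: "connected_graph V E"
    and iso: "isometric_cycle V E c" and st: "spanning_tree V E T"
  shows "length c \<le> 3 * Max {gdist V T u v | u v. {u,v} \<in> E}"
proof -
  let ?n = "length c"
  define K where "K = Max {gdist V T u v | u v. {u,v} \<in> E}"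
  have cyc: "is_cycle V E c" using iso by (simp add: isometric_cycle_def)
  have n3: "?n \<ge> 3" and cV: "set c \<subseteq> V" and ce: "\<And>i. i < ?n \<Longrightarrow> {c!i, c!((i+1) mod ?n)} \<in> E"
    using cyc by (auto simp: is_cycle_def)
  have np: "?n > 0" using n3 by linarith
  have TE: "T \<subseteq> E" and Tcon: "connected_graph V T" and Tac: "\<not>(\<exists>c. is_cycle V T c)"
    using st by (auto simp: spanning_tree_def is_tree_def)
  have finV: "finite V" and Eedge: "\<And>e. e \<in> E \<Longrightarrow> card e = 2 \<and> e \<subseteq> V"
    using sg by (auto simp: simple_graph_def)
  have finK: "finite {gdist V T u v | u v. {u,v} \<in> E}"
  proof (rule finite_subset)
    show "{gdist V T u v | u v. {u,v} \<in> E} \<subseteq> (\<lambda>(u,v). gdist V T u v) ` (V \<times> V)"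
    proof
      fix g assume "g \<in> {gdist V T u v | u v. {u,v} \<in> E}"
      then obtain u v where uv: "g = gdist V T u v" "{u,v} \<in> E" by blast
      then have "u \<in> V" "v \<in> V" using Eedge[OF uv(2)] by auto
      then show "g \<in> (\<lambda>(u,v). gdist V T u v) ` (V \<times> V)" using uv(1) by force
    qed
    show "finite ((\<lambda>(u,v). gdist V T u v) ` (V \<times> V))" using finV by simp
  qed
  have Kge: "\<And>u v. {u,v} \<in> E \<Longrightarrow> gdist V T u v \<le> K"
    unfolding K_def using finK by (intro Max_ge) auto
  have reachT: "\<And>u v. u \<in> V \<Longrightarrow> v \<in> V \<Longrightarrow> reach V T u v"
    using Tcon unfolding connected_graph_def reach_def by blast
  have cin: "\<And>x. c ! (x mod ?n) \<in> V" using cV np by auto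
  have "\<forall>i. \<exists>w. i < ?n \<longrightarrow> walk V T w \<and> hd w = c!i \<and> last w = c!((i+1) mod ?n)
      \<and> length w = gdist V T (c!i) (c!((i+1) mod ?n)) + 1"
  proof
    fix i
    show "\<exists>w. i < ?n \<longrightarrow> walk V T w \<and> hd w = c!i \<and> last w = c!((i+1) mod ?n)
      \<and> length w = gdist V T (c!i) (c!((i+1) mod ?n)) + 1"
    proof (cases "i < ?n")
      case True
      have "c!i \<in> V" using cV True by auto
      moreover have "c!((i+1) mod ?n) \<in> V" using cV np by auto
      ultimately have "reach V T (c!i) (c!((i+1) mod ?n))" using reachT by blast
      from gdist_ex[OF this] show ?thesis by blast
    qed simp
  qed
  then obtain P where P: "\<And>i. i < ?n \<Longrightarrow> walk V T (P i) \<and> hd (P i) = c!i \<and> last (P i) = c!((i+1) mod ?n)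
      \<and> length (P i) = gdist V T (c!i) (c!((i+1) mod ?n)) + 1"
    by metis
  interpret ts: tsetup V T c P
  proof
    show "\<And>e. e \<in> T \<Longrightarrow> card e = 2 \<and> e \<subseteq> V" using Eedge TE by blast
    show "finite V" by fact
    show "connected_graph V T" by fact
    show "\<not>(\<exists>c. is_cycle V T c)" by fact
    show "length c \<ge> 3" by fact
    show "set c \<subseteq> V" by fact
    show "\<And>i. i < ?n \<Longrightarrow> walk V T (P i) \<and> hd (P i) = c!i \<and> last (P i) = c!((i+1) mod ?n)"
      using P by blast
  qed
  obtain m where mV: "m \<in> V" and gm: "ts.good m" using ts.good_exists by blast
  let ?h = "?n div 2"
  have gd: "\<forall>a. \<exists>t<?h. (\<lambda>i. m \<in> set (P i)) ((a+t) mod ?n)" using gm unfolding ts.good_def by simp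
  have n2: "?n \<le> 2 * ?h + 1" by simp
  obtain p d2 d3 where sel: "p < ?n" "m \<in> set (P p)" "m \<in> set (P ((p+d2) mod ?n))"
      "m \<in> set (P ((p+d3) mod ?n))" "d2 \<le> ?h" "d2 \<le> d3" "d3 \<le> d2 + ?h" "?n \<le> d3 + ?h" "d3 < ?n"
    using select3[OF np n2 gd] by blast
  define a where "a x = gdist V T (c ! (x mod ?n)) m" for x
  define b where "b x = gdist V T m (c ! ((x+1) mod ?n))" for x
  have ab: "a x + b x \<le> K" if Q: "m \<in> set (P (x mod ?n))" for x
  proof -
    have xl: "x mod ?n < ?n" using np by simp
    have "gdist V T (hd (P (x mod ?n))) m + gdist V T m (last (P (x mod ?n))) + 1 \<le> length (P (x mod ?n))"
      using gdist_split[OF _ Q] P[OF xl] by blast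
    moreover have "last (P (x mod ?n)) = c ! ((x+1) mod ?n)" using P[OF xl] by (simp add: mod_Suc_eq)
    moreover have "gdist V T (c ! (x mod ?n)) (c!((x mod ?n + 1) mod ?n)) \<le> K" using Kge ce[OF xl] by blast
    ultimately show ?thesis using P[OF xl] unfolding a_def b_def by auto
  qed
  have key: "off \<le> gdist V T (c ! (x mod ?n)) (c ! ((x + off) mod ?n))" if "2 * off \<le> ?n" for x off
  proof -
    have "off \<le> gdist (set c) (cycle_edges c) (c ! (x mod ?n)) (c ! ((x mod ?n + off) mod ?n))"
      using cycle_dist_lower[OF cyc _ that] np by simp
    also have "(x mod ?n + off) mod ?n = (x + off) mod ?n" by (simp add: mod_add_left_eq)
    also have "gdist (set c) (cycle_edges c) (c ! (x mod ?n)) (c ! ((x + off) mod ?n))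
        = gdist V E (c ! (x mod ?n)) (c ! ((x + off) mod ?n))"
      using iso np unfolding isometric_cycle_def by simp
    also have "\<dots> \<le> gdist V T (c ! (x mod ?n)) (c ! ((x + off) mod ?n))"
      using gdist_mono[OF TE reachT[OF cin cin]] .
    finally show ?thesis .
  qed
  have cha: "off \<le> a x + a (x + off)" if "2 * off \<le> ?n" for x off
  proof -
    have "off \<le> gdist V T (c ! (x mod ?n)) (c ! ((x + off) mod ?n))" using key[OF that] .
    also have "\<dots> \<le> gdist V T (c ! (x mod ?n)) m + gdist V T m (c ! ((x + off) mod ?n))"
      by (rule gdist_triangle[OF reachT[OF cin mV] reachT[OF mV cin]])
    also have "gdist V T m (c ! ((x + off) mod ?n)) = a (x + off)"
      unfolding a_def by (rule gdist_sym[OF reachT[OF mV cin]])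
    finally show ?thesis unfolding a_def by simp
  qed
  have chb: "off \<le> b x + b (x + off)" if "2 * off \<le> ?n" for x off
  proof -
    have "off \<le> gdist V T (c ! ((x+1) mod ?n)) (c ! ((x + 1 + off) mod ?n))" using key[OF that] .
    also have "\<dots> \<le> gdist V T (c ! ((x+1) mod ?n)) m + gdist V T m (c ! ((x + 1 + off) mod ?n))"
      by (rule gdist_triangle[OF reachT[OF cin mV] reachT[OF mV cin]])
    also have "gdist V T (c ! ((x+1) mod ?n)) m = b x"
      unfolding b_def by (rule gdist_sym[OF reachT[OF cin mV]])
    also have "(x + 1 + off) = (x + off) + 1" by simp
    finally show ?thesis unfolding b_def by simp
  qed
  have h2: "2 * ?h \<le> ?n" by simp
  have o1: "2 * d2 \<le> ?n" "2 * (d3 - d2) \<le> ?n" "2 * (?n - d3) \<le> ?n" using sel h2 by auto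
  have e2: "p + d2 + (d3 - d2) = p + d3" using sel by simp
  have d3n: "d3 < ?n" using sel by simp
  have e3: "p + d3 + (?n - d3) = p + ?n" using d3n by simp
  have pm: "p mod ?n = p" using sel by simp
  have ap: "a (p + ?n) = a p" "b (p + ?n) = b p" unfolding a_def b_def
    by (simp, metis add.commute add.left_commute mod_add_self2)
  have A1: "d2 \<le> a p + a (p + d2)" using cha[OF o1(1)] .
  have A2: "d3 - d2 \<le> a (p + d2) + a (p + d3)" using cha[OF o1(2), of "p + d2"] e2 by simp
  have A3: "?n - d3 \<le> a (p + d3) + a p" using cha[OF o1(3), of "p + d3"] e3 ap by simp
  have B1: "d2 \<le> b p + b (p + d2)" using chb[OF o1(1)] .
  have B2: "d3 - d2 \<le> b (p + d2) + b (p + d3)" using chb[OF o1(2), of "p + d2"] e2 by simp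
  have B3: "?n - d3 \<le> b (p + d3) + b p" using chb[OF o1(3), of "p + d3"] e3 ap by simp
  have C1: "a p + b p \<le> K" using ab[of p] sel pm by simp
  have C2: "a (p+d2) + b (p+d2) \<le> K" using ab[of "p+d2"] sel by simp
  have C3: "a (p+d3) + b (p+d3) \<le> K" using ab[of "p+d3"] sel by simp
  have "?n \<le> 3 * K" using A1 A2 A3 B1 B2 B3 C1 C2 C3 sel d3n by linarith
  then show ?thesis unfolding K_def .
qed

theorem mainTheorem2:
  fixes V :: "'a set" and E :: "'a set set" and c :: "'a list"
  assumes "simple_graph V E"
    and "connected_graph V E"
    and "isometric_cycle V E c"
  shows "int (stretch V E) \<ge> \<lceil>real (length c) / 3\<rceil>"
proof -
  define f where "f T = Max {gdist V T u v | u v. {u, v} \<in> E}" for T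
  have finE: "finite E" using assms(1) unfolding simple_graph_def
    by (meson Pow_iff finite_Pow_iff finite_subset subsetI)
  have fin: "finite (f ` {T. spanning_tree V E T})"
    by (rule finite_imageI, rule finite_subset[of _ "Pow E"]) (auto simp: spanning_tree_def finE)
  obtain T0 where "spanning_tree V E T0" using spanning_tree_exists[OF assms(1,2)] by blast
  then have ne: "f ` {T. spanning_tree V E T} \<noteq> {}" by blast
  have "stretch V E \<in> f ` {T. spanning_tree V E T}"
    unfolding stretch_def f_def[symmetric] using Min_in[OF fin ne] .
  then obtain T where T: "spanning_tree V E T" "stretch V E = f T" by blast
  have "length c \<le> 3 * stretch V E" using tree_bound[OF assms T(1)] T(2) unfolding f_def by simp
  then have "real (length c) / 3 \<le> real_of_int (int (stretch V E))" by simp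
  then show ?thesis by (simp add: ceiling_le_iff)
qed

end
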